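(* Let $G$ be a connected graph with at least one edge, and let $l(G)=\min\{|L(uv)|: uv\in E(G)\}$. Then $l(G)=|V(G)|-1$ if and only if $G$ is isomorphic to a cycle of odd length.
   Context: All graphs are finite and simple; $d$ is the shortest-path distance. For an edge $uv$, $L(uv)=\{x\in V(G): d(u,x)\neq d(v,x)\}$. *)

theory Defs
  imports Main
begin

definition simple_graph :: "'a set \<Rightarrow> ('a \<Rightarrow> 'a \<Rightarrow> bool) \<Rightarrow> bool" where
  "simple_graph V E \<longleftrightarrow> finite V \<and> (\<forall>u v. E u v \<longrightarrow> u \<in> V \<and> v \<in> V)
     \<and> (\<forall>u v. E u v \<longrightarrow> E v u) \<and> (\<forall>u. \<not> E u u)"

definition is_walk :: "'a set \<Rightarrow> ('a \<Rightarrow> 'a \<Rightarrow> bool) \<Rightarrow> 'a list \<Rightarrow> bool" where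
  "is_walk V E xs \<longleftrightarrow> xs \<noteq> [] \<and> set xs \<subseteq> V \<and>
     (\<forall>i. Suc i < length xs \<longrightarrow> E (xs ! i) (xs ! Suc i))"

definition walk_between :: "'a set \<Rightarrow> ('a \<Rightarrow> 'a \<Rightarrow> bool) \<Rightarrow> 'a \<Rightarrow> 'a \<Rightarrow> nat \<Rightarrow> bool" where
  "walk_between V E u v n \<longleftrightarrow>
     (\<exists>xs. is_walk V E xs \<and> hd xs = u \<and> last xs = v \<and> length xs = Suc n)"

definition connected_graph :: "'a set \<Rightarrow> ('a \<Rightarrow> 'a \<Rightarrow> bool) \<Rightarrow> bool" where
  "connected_graph V E \<longleftrightarrow> (\<forall>u\<in>V. \<forall>v\<in>V. \<exists>n. walk_between V E u v n)"

text \<open>Shortest-path distance (meaningful for u, v in the same component).\<close>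
definition dist :: "'a set \<Rightarrow> ('a \<Rightarrow> 'a \<Rightarrow> bool) \<Rightarrow> 'a \<Rightarrow> 'a \<Rightarrow> nat" where
  "dist V E u v = (LEAST n. walk_between V E u v n)"

definition Lset :: "'a set \<Rightarrow> ('a \<Rightarrow> 'a \<Rightarrow> bool) \<Rightarrow> 'a \<Rightarrow> 'a \<Rightarrow> 'a set" where
  "Lset V E u v = {x \<in> V. dist V E u x \<noteq> dist V E v x}"

definition lG :: "'a set \<Rightarrow> ('a \<Rightarrow> 'a \<Rightarrow> bool) \<Rightarrow> nat" where
  "lG V E = Min {card (Lset V E u v) | u v. E u v}"

definition iso_to_cycle :: "'a set \<Rightarrow> ('a \<Rightarrow> 'a \<Rightarrow> bool) \<Rightarrow> nat \<Rightarrow> bool" where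
  "iso_to_cycle V E n \<longleftrightarrow> n \<ge> 3 \<and> (\<exists>f. bij_betw f {0..<n} V \<and>
     (\<forall>i<n. \<forall>j<n. E (f i) (f j) \<longleftrightarrow> (j = (i + 1) mod n \<or> i = (j + 1) mod n)))"

end

theory Submission
  imports Defs
begin


definition wk :: "('a \<Rightarrow> 'a \<Rightarrow> bool) \<Rightarrow> (nat \<Rightarrow> 'a) \<Rightarrow> nat \<Rightarrow> 'a \<Rightarrow> 'a \<Rightarrow> bool" where
  "wk E p m a b \<longleftrightarrow> p 0 = a \<and> p m = b \<and> (\<forall>i<m. E (p i) (p (Suc i)))"

lemma wk_app: assumes "wk E p m a b" "wk E q n b c" shows "\<exists>r. wk E r (m+n) a c"
proof -
  let ?r = "\<lambda>t. if t \<le> m then p t else q (t - m)"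
  have "wk E ?r (m+n) a c" unfolding wk_def
  proof (intro conjI allI impI)
    show "?r 0 = a" using assms by (simp add: wk_def)
    show "?r (m+n) = c" using assms by (cases n) (auto simp: wk_def)
    fix i assume i: "i < m+n"
    show "E (?r i) (?r (Suc i))"
    proof (cases "i < m")
      case True then show ?thesis using assms by (auto simp: wk_def)
    next
      case False
      then have "i - m < n" "Suc i - m = Suc (i - m)" using i by auto
      moreover have "?r i = q (i - m)" using False assms by (auto simp: wk_def)
      ultimately show ?thesis using assms False by (auto simp: wk_def)
    qed
  qed
  then show ?thesis by blast
qed

lemma wk_shift: assumes "wk E p m a b" "i \<le> j" "j \<le> m" shows "wk E (\<lambda>t. p (i+t)) (j-i) (p i) (p j)"
  using assms unfolding wk_def by auto

lemma wk_rev: assumes "wk E p m a b" "\<And>u v. E u v \<Longrightarrow> E v u" shows "\<exists>r. wk E r m b a"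
proof -
  have "wk E (\<lambda>t. p (m - t)) m b a" unfolding wk_def
  proof (intro conjI allI impI)
    fix i assume "i < m"
    then have "m - Suc i < m" "Suc (m - Suc i) = m - i" by auto
    then show "E (p (m - i)) (p (m - Suc i))" using assms unfolding wk_def by metis
  qed (use assms in \<open>auto simp: wk_def\<close>)
  then show ?thesis by blast
qed

definition cdist :: "nat \<Rightarrow> nat \<Rightarrow> nat \<Rightarrow> nat" where
  "cdist n a b = (let t = (if a \<le> b then b - a else a - b) in min t (n - t))"
lemma modsuc: "i < (L::nat) \<Longrightarrow> (i+1) mod L = (if i+1 = L then 0 else i+1)"
  by auto
lemma arC: "i \<le> j \<Longrightarrow> j < L \<Longrightarrow> 3 \<le> (L::nat) \<Longrightarrow> (min (j-i) (L-(j-i)) = 1 \<longleftrightarrow> j = (if i+1 = L then 0 else i+1) \<or> i = (if j+1 = L then 0 else j+1))"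
  unfolding  min_def by (auto split: if_splits)
lemma arB: "i < n \<Longrightarrow> a < n \<Longrightarrow> b < n \<Longrightarrow> (b = (if a+1 = n then 0 else a+1) \<or> a = (if b+1 = n then 0 else b+1)) \<Longrightarrow>
   cdist n i b \<le> cdist n i a + 1"
  unfolding cdist_def Let_def min_def by (auto split: if_splits)
lemma arA: "n = 2*k+1 \<Longrightarrow> a < n \<Longrightarrow> j < n \<Longrightarrow> b = (if a+1 = n then 0 else a+1) \<Longrightarrow>
   cdist n a j = cdist n b j \<longleftrightarrow> j = (if a+k+1 < n then a+k+1 else a-k)"
  unfolding cdist_def Let_def min_def by (auto split: if_splits)

locale G =
  fixes V :: "'a set" and E :: "'a \<Rightarrow> 'a \<Rightarrow> bool"
  assumes sg: "simple_graph V E" and conn: "connected_graph V E"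
begin

abbreviation d where "d \<equiv> dist V E"

lemma Ein: "E u v \<Longrightarrow> u \<in> V \<and> v \<in> V" using sg unfolding simple_graph_def by blast
lemma Esym: "E u v \<Longrightarrow> E v u" using sg unfolding simple_graph_def by blast
lemma Eirr: "\<not> E u u" using sg unfolding simple_graph_def by blast
lemma finV: "finite V" using sg unfolding simple_graph_def by blast

lemma wk_in: "wk E p m a b \<Longrightarrow> a \<in> V \<Longrightarrow> t \<le> m \<Longrightarrow> p t \<in> V"
proof (cases t)
  case (Suc s)
  assume "wk E p m a b" "t \<le> m"
  then have "E (p s) (p t)" using Suc unfolding wk_def by auto
  then show ?thesis using Ein by blast
qed (auto simp: wk_def)

lemma walk_between_iff: "walk_between V E a b m \<longleftrightarrow> a \<in> V \<and> (\<exists>p. wk E p m a b)"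
proof
  assume "walk_between V E a b m"
  then obtain xs where xs: "is_walk V E xs" "hd xs = a" "last xs = b" "length xs = Suc m"
    unfolding walk_between_def by blast
  have "a \<in> V" using xs by (metis hd_in_set is_walk_def subsetD)
  moreover have "wk E ((!) xs) m a b" using xs unfolding wk_def is_walk_def
    by (auto simp: hd_conv_nth last_conv_nth)
  ultimately show "a \<in> V \<and> (\<exists>p. wk E p m a b)" by blast
next
  assume "a \<in> V \<and> (\<exists>p. wk E p m a b)"
  then obtain p where a: "a \<in> V" and p: "wk E p m a b" by blast
  let ?xs = "map p [0..<Suc m]"
  have "is_walk V E ?xs" unfolding is_walk_def
  proof (intro conjI allI impI)
    show "set ?xs \<subseteq> V" using wk_in[OF p a] by auto
    fix i assume "Suc i < length ?xs"
    then show "E (?xs ! i) (?xs ! Suc i)" using p unfolding wk_def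
      by (simp del: upt_Suc add: nth_map_upt)
  qed simp
  moreover have "hd ?xs = a" using p by (simp del: upt_Suc add: wk_def hd_map upt_conv_Cons)
  moreover have "last ?xs = b" using p by (simp add: wk_def)
  ultimately show "walk_between V E a b m" unfolding walk_between_def
    by (metis length_map length_upt minus_nat.diff_0)
qed

lemma dist_walk: assumes "a \<in> V" "b \<in> V" shows "\<exists>p. wk E p (d a b) a b"
proof -
  have "\<exists>n. walk_between V E a b n" using conn assms unfolding connected_graph_def by blast
  then have "walk_between V E a b (d a b)" unfolding dist_def by (rule LeastI_ex)
  then show ?thesis using walk_between_iff by blast
qed

lemma dist_le: "a \<in> V \<Longrightarrow> wk E p m a b \<Longrightarrow> d a b \<le> m"
  unfolding dist_def by (rule Least_le) (use walk_between_iff in blast)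

lemma dist_self: "a \<in> V \<Longrightarrow> d a a = 0"
  using dist_le[of a "\<lambda>_. a" 0 a] by (simp add: wk_def)

lemma dist_0: "a \<in> V \<Longrightarrow> b \<in> V \<Longrightarrow> d a b = 0 \<Longrightarrow> a = b"
  using dist_walk[of a b] by (auto simp: wk_def)

lemma dist_sym_le: assumes "a \<in> V" "b \<in> V" shows "d b a \<le> d a b"
proof -
  obtain p where p: "wk E p (d a b) a b" using dist_walk assms by blast
  obtain r where "wk E r (d a b) b a" using wk_rev[OF p Esym] by blast
  then show ?thesis using dist_le assms by blast
qed

lemma dist_sym: "a \<in> V \<Longrightarrow> b \<in> V \<Longrightarrow> d a b = d b a"
  using dist_sym_le by (meson le_antisym)

lemma dist_edge: "E a b \<Longrightarrow> d a b = 1"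
proof -
  assume e: "E a b"
  have "wk E (\<lambda>t. if t = 0 then a else b) 1 a b" using e by (simp add: wk_def)
  then have "d a b \<le> 1" using dist_le Ein e by blast
  moreover have "d a b \<noteq> 0" using dist_0 Ein e Eirr by blast
  ultimately show ?thesis by simp
qed

lemma edge_iff_dist: "a \<in> V \<Longrightarrow> b \<in> V \<Longrightarrow> E a b \<longleftrightarrow> d a b = 1"
proof
  assume "a \<in> V" "b \<in> V" "d a b = 1"
  then obtain p where "wk E p 1 a b" using dist_walk by fastforce
  then show "E a b" unfolding wk_def by auto
qed (rule dist_edge)

lemma dist_tri: assumes "E a b" "x \<in> V" shows "d a x \<le> d b x + 1"
proof -
  obtain p where p: "wk E p (d b x) b x" using dist_walk Ein assms by blast
  have "wk E (\<lambda>t. if t = 0 then a else b) 1 a b" using assms by (simp add: wk_def)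
  from wk_app[OF this p] obtain r where "wk E r (1 + d b x) a x" by blast
  then show ?thesis using dist_le Ein assms by fastforce
qed

lemma cw_upper: assumes c: "wk E c L z z" and z: "z \<in> V" and ij: "i \<le> j" "j \<le> L"
  shows "d (c i) (c j) \<le> j - i" "d (c i) (c j) \<le> L - (j - i)"
proof -
  have ci: "c i \<in> V" "c j \<in> V" using wk_in[OF c z] ij by auto
  show "d (c i) (c j) \<le> j - i" using dist_le[OF ci(1) wk_shift[OF c ij]] .
  have 1: "wk E (\<lambda>t. c (j+t)) (L-j) (c j) z" using wk_shift[OF c ij(2) order_refl] c by (simp add: wk_def)
  have 2: "wk E (\<lambda>t. c (0+t)) (i-0) z (c i)" using wk_shift[of E c L z z 0 i] c ij by (simp add: wk_def)
  from wk_app[OF 1 2] obtain r where "wk E r (L - j + (i - 0)) (c j) (c i)" by blast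
  then have "d (c j) (c i) \<le> L - j + i" using dist_le ci by fastforce
  then show "d (c i) (c j) \<le> L - (j - i)" using dist_sym ci ij by simp
qed

end


context G begin

lemma forward:
  assumes H1: "\<And>a b x y. E a b \<Longrightarrow> x\<in>V \<Longrightarrow> y\<in>V \<Longrightarrow> d a x = d b x \<Longrightarrow> d a y = d b y \<Longrightarrow> x = y"
    and e0: "E a0 b0" and x0: "x0 \<in> V" "d a0 x0 = d b0 x0"
  shows "\<exists>n. odd n \<and> iso_to_cycle V E n"
proof -
  have a0: "a0 \<in> V" "b0 \<in> V" using Ein e0 by auto
  define k0 where "k0 = d a0 x0"
  obtain p where p: "wk E p k0 a0 x0" using dist_walk a0 x0 k0_def by blast
  obtain q where q: "wk E q k0 b0 x0" using dist_walk a0 x0 k0_def by fastforce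
  obtain q' where q': "wk E q' k0 x0 b0" using wk_rev[OF q Esym] by blast
  obtain r where r: "wk E r (k0+k0) a0 b0" using wk_app[OF p q'] by blast
  have "wk E (\<lambda>t. if t = 0 then b0 else a0) 1 b0 a0" using e0 Esym by (simp add: wk_def)
  from wk_app[OF r this] obtain r' where r': "wk E r' (k0+k0+1) a0 a0" by blast
  define P where "P M \<longleftrightarrow> odd M \<and> (\<exists>c z. z \<in> V \<and> wk E c M z z)" for M
  have "P (k0+k0+1)" unfolding P_def using r' a0 by auto
  define L where "L = (LEAST M. P M)"
  have PL: "P L" unfolding L_def by (rule LeastI) fact
  have Lmin: "\<And>M. P M \<Longrightarrow> L \<le> M" unfolding L_def by (rule Least_le)
  obtain c z where z: "z \<in> V" and c: "wk E c L z z" and oddL: "odd L" using PL P_def by blast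
  have cV: "\<And>t. t \<le> L \<Longrightarrow> c t \<in> V" using wk_in[OF c z] by blast
  have c0: "c 0 = z" "c L = z" using c by (auto simp: wk_def)
  have iso: "d (c i) (c j) = min (j-i) (L-(j-i))" if ij: "i \<le> j" "j \<le> L" for i j
  proof -
    have u: "d (c i) (c j) \<le> j - i" "d (c i) (c j) \<le> L - (j - i)" using cw_upper[OF c z ij] by auto
    have ci: "c i \<in> V" "c j \<in> V" using cV ij by auto
    have "\<not> d (c i) (c j) < min (j-i) (L-(j-i))"
    proof
      assume lt: "d (c i) (c j) < min (j-i) (L-(j-i))"
      define D where "D = d (c i) (c j)"
      obtain w where w: "wk E w D (c i) (c j)" using dist_walk ci D_def by blast
      obtain w' where w': "wk E w' D (c j) (c i)" using wk_rev[OF w Esym] by blast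
      obtain r1 where r1: "wk E r1 (j - i + D) (c i) (c i)" using wk_app[OF wk_shift[OF c ij] w'] by blast
      have 1: "wk E (\<lambda>t. c (j+t)) (L-j) (c j) z" using wk_shift[OF c ij(2) order_refl] c0 by simp
      have 2: "wk E (\<lambda>t. c (0+t)) (i-0) z (c i)" using wk_shift[of E c L z z 0 i] c ij c0 by simp
      obtain r2 where r2: "wk E r2 (L - j + (i - 0)) (c j) (c i)" using wk_app[OF 1 2] by blast
      obtain r3 where r3: "wk E r3 (L - j + (i - 0) + D) (c j) (c j)" using wk_app[OF r2 w] by blast
      have sum: "(j - i + D) + (L - j + (i - 0) + D) = L + 2*D" using ij by simp
      have "odd (j - i + D) \<or> odd (L - j + (i - 0) + D)"
      proof (rule ccontr)
        assume "\<not> (odd (j - i + D) \<or> odd (L - j + (i - 0) + D))"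
        then have "even ((j - i + D) + (L - j + (i - 0) + D))" by simp
        then show False using sum oddL by simp
      qed
      then have "P (j - i + D) \<or> P (L - j + (i - 0) + D)" unfolding P_def using r1 r3 ci by blast
      then have "L \<le> j - i + D \<or> L \<le> L - j + (i - 0) + D" using Lmin by blast
      moreover have "j - i + D < L" "L - j + (i - 0) + D < L" using lt ij D_def by auto
      ultimately show False by linarith
    qed
    then show ?thesis using u by linarith
  qed
  obtain k where Lk: "L = 2*k+1" using oddL oddE by blast
  have cover: "\<exists>t<L. c t = w" if w: "w \<in> V" for w
  proof (rule ccontr)
    assume nw: "\<not> (\<exists>t<L. c t = w)"
    define g where "g t = d (c t) w" for t
    have step: "g (Suc t) \<le> g t + 1 \<and> g t \<le> g (Suc t) + 1" if "t < L" for t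
    proof -
      have "E (c t) (c (Suc t))" using c that by (simp add: wk_def)
      then show ?thesis unfolding g_def using dist_tri Esym w by blast
    qed
    have "\<exists>t<L. g t = g (Suc t)"
    proof (rule ccontr)
      assume ne: "\<not> (\<exists>t<L. g t = g (Suc t))"
      have par: "t \<le> L \<Longrightarrow> (even (g t + t) \<longleftrightarrow> even (g 0))" for t
      proof (induction t)
        case (Suc t)
        then have "t < L" by simp
        then have "g (Suc t) = g t + 1 \<or> g t = g (Suc t) + 1" using step ne by fastforce
        then have "even (g (Suc t) + Suc t) \<longleftrightarrow> even (g t + t)" by presburger
        then show ?case using Suc by simp
      qed simp
      have "g L = g 0" unfolding g_def using c0 by simp
      then show False using par[of L] oddL by simp
    qed
    then obtain t where t: "t < L" "g t = g (Suc t)" by blast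
    have et: "E (c t) (c (Suc t))" using c t by (simp add: wk_def)
    have "\<exists>j \<le> L. d (c t) (c j) = d (c (Suc t)) (c j)"
    proof (cases "t + k + 1 \<le> L")
      case True
      have "d (c t) (c (t+k+1)) = k" using iso[of t "t+k+1"] True Lk by simp
      moreover have "d (c (Suc t)) (c (t+k+1)) = k" using iso[of "Suc t" "t+k+1"] True Lk by simp
      ultimately show ?thesis using True by (intro exI[of _ "t+k+1"]) auto
    next
      case False
      then have tk: "k \<le> t" using Lk by simp
      have "d (c (t-k)) (c t) = k" using iso[of "t-k" t] t tk Lk by simp
      moreover have "d (c (t-k)) (c (Suc t)) = k" using iso[of "t-k" "Suc t"] t tk Lk False by simp
      moreover have "c (t-k) \<in> V" "c t \<in> V" "c (Suc t) \<in> V" using cV t by auto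
      ultimately have "d (c t) (c (t-k)) = d (c (Suc t)) (c (t-k))" using dist_sym by metis
      then show ?thesis using t by (intro exI[of _ "t-k"]) auto
    qed
    then obtain j where j: "j \<le> L" "d (c t) (c j) = d (c (Suc t)) (c j)" by blast
    have "w = c j" using H1[OF et w cV[OF j(1)]] t j unfolding g_def by blast
    moreover have "c j = c 0 \<or> j < L" using j(1) c0 by (cases "j = L") auto
    ultimately show False using nw t by auto
  qed
  have L3: "3 \<le> L"
  proof -
    have "L \<noteq> 1"
    proof
      assume "L = 1"
      then have "E z z" using c by (auto simp: wk_def)
      then show False using Eirr by blast
    qed
    then show ?thesis using oddL Lk by simp
  qed
  have inj1: "i = j" if "i < L" "j < L" "i \<le> j" "c i = c j" for i j
  proof -
    have "d (c i) (c j) = 0" using that dist_self cV by simp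
    then show ?thesis using iso[of i j] that by auto
  qed
  have "inj_on c {0..<L}"
    by (rule inj_onI) (metis atLeastLessThan_iff inj1 nat_le_linear)
  moreover have "c ` {0..<L} = V" using cover cV by force
  ultimately have bij: "bij_betw c {0..<L} V" unfolding bij_betw_def by blast
  have adj: "E (c i) (c j) \<longleftrightarrow> (j = (i + 1) mod L \<or> i = (j + 1) mod L)" if "i < L" "j < L" for i j
  proof -
    have v: "c i \<in> V" "c j \<in> V" using cV that by auto
    have mi: "(i+1) mod L = (if i+1 = L then 0 else i+1)" "(j+1) mod L = (if j+1 = L then 0 else j+1)"
      using that by auto
    show ?thesis
    proof (cases "i \<le> j")
      case True
      then show ?thesis using edge_iff_dist[OF v] iso[of i j] arC[OF True that(2) L3] mi that by simp
    next
      case False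
      then have "j \<le> i" by simp
      then show ?thesis using edge_iff_dist[OF v] dist_sym[OF v] iso[of j i] arC[OF \<open>j \<le> i\<close> that(1) L3] mi that
        by auto
    qed
  qed
  have "iso_to_cycle V E L" unfolding iso_to_cycle_def
    by (intro conjI L3 exI[of _ c] bij allI impI adj)
  then show ?thesis using oddL by blast
qed

end


lemma cdist_sym: "cdist n a b = cdist n b a"
  unfolding cdist_def Let_def by auto

lemma Lset_sym: "Lset V E u v = Lset V E v u"
  unfolding Lset_def by auto

context G begin

lemma backward:
  assumes "odd n" "iso_to_cycle V E n"
  shows "lG V E = card V - 1"
proof -
  obtain f where n3: "3 \<le> n" and f: "bij_betw f {0..<n} V"
    and adj: "\<forall>i<n. \<forall>j<n. E (f i) (f j) \<longleftrightarrow> (j = (i + 1) mod n \<or> i = (j + 1) mod n)"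
    using assms(2) unfolding iso_to_cycle_def by blast
  obtain k where nk: "n = 2*k+1" using assms(1) oddE by blast
  have fV: "f i \<in> V" if "i < n" for i using f that bij_betwE by fastforce
  have finj: "i = j" if "i<n" "j<n" "f i = f j" for i j
    using f that unfolding bij_betw_def inj_on_def by auto
  have fsurj: "\<exists>i<n. f i = x" if "x \<in> V" for x
    using f that unfolding bij_betw_def by (metis atLeastLessThan_iff image_iff)
  have cardV: "card V = n" using bij_betw_same_card[OF f] by simp
  have adj': "E (f i) (f j) \<longleftrightarrow> (j = (if i+1 = n then 0 else i+1) \<or> i = (if j+1 = n then 0 else j+1))"
    if "i<n" "j<n" for i j
    using adj that modsuc[of i n] modsuc[of j n] by simp
  have lower: "cdist n i j \<le> d (f i) (f j)" if ij: "i<n" "j<n" for i j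
  proof -
    define m where "m = d (f i) (f j)"
    obtain p where p: "wk E p m (f i) (f j)" using dist_walk fV ij m_def by blast
    define h where "h t = (SOME a. a < n \<and> f a = p t)" for t
    have h: "h t < n \<and> f (h t) = p t" if "t \<le> m" for t
    proof -
      have "p t \<in> V" using wk_in[OF p fV[OF ij(1)] that] .
      then have "\<exists>a. a < n \<and> f a = p t" using fsurj by blast
      then show ?thesis unfolding h_def by (rule someI_ex)
    qed
    have ind: "cdist n i (h t) \<le> t" if "t \<le> m" for t
      using that
    proof (induction t)
      case 0
      have "f (h 0) = f i" using h[of 0] p by (simp add: wk_def)
      then have "h 0 = i" using finj h[of 0] ij by blast
      then show ?case by (simp add: cdist_def)
    next
      case (Suc t)
      then have tm: "t < m" by simp
      have ht: "h t < n" "h (Suc t) < n" "f (h t) = p t" "f (h (Suc t)) = p (Suc t)"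
        using h[of t] h[of "Suc t"] Suc by auto
      have "E (p t) (p (Suc t))" using p tm by (simp add: wk_def)
      then have "E (f (h t)) (f (h (Suc t)))" using ht by simp
      then have "h (Suc t) = (if h t+1 = n then 0 else h t+1) \<or> h t = (if h (Suc t)+1 = n then 0 else h (Suc t)+1)"
        using adj' ht by blast
      then have "cdist n i (h (Suc t)) \<le> cdist n i (h t) + 1"
        using arB[OF ij(1) ht(1) ht(2)] by blast
      then show ?case using Suc tm by simp
    qed
    have "f (h m) = f j" using h[of m] p by (simp add: wk_def)
    then have "h m = j" using finj h[of m] ij by blast
    then show ?thesis using ind[of m] m_def by simp
  qed
  have f0: "f 0 \<in> V" using fV n3 by simp
  have cyc: "wk E (\<lambda>t. f (t mod n)) n (f 0) (f 0)" unfolding wk_def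
  proof (intro conjI allI impI)
    fix i assume i: "i < n"
    have "(i+1) mod n < n" using n3 by simp
    then have "E (f i) (f ((i+1) mod n))" using adj i by blast
    then show "E (f (i mod n)) (f (Suc i mod n))" using i by simp
  qed auto
  have upper: "d (f i) (f j) \<le> min (j-i) (n-(j-i))" if "i \<le> j" "j < n" for i j
    using cw_upper[OF cyc f0, of i j] that by simp
  have deq: "d (f i) (f j) = cdist n i j" if "i<n" "j<n" for i j
  proof (cases "i \<le> j")
    case True
    then have "d (f i) (f j) \<le> cdist n i j" using upper[OF True that(2)] unfolding cdist_def Let_def by simp
    then show ?thesis using lower[OF that] by (rule antisym)
  next
    case False
    then have "j \<le> i" by simp
    then have "d (f j) (f i) \<le> cdist n j i"
      using upper[OF \<open>j \<le> i\<close> that(1)] unfolding cdist_def Let_def by simp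
    then have "d (f j) (f i) = cdist n j i" using lower[OF that(2) that(1)] by (rule antisym)
    then show ?thesis using dist_sym fV that cdist_sym by metis
  qed
  have key: "card (Lset V E (f a) (f b)) = n - 1"
    if ab: "a<n" "b<n" "b = (if a+1=n then 0 else a+1)" for a b
  proof -
    define opp where "opp = (if a+k+1 < n then a+k+1 else a-k)"
    have o: "opp < n" using nk ab unfolding opp_def by auto
    have "x \<in> Lset V E (f a) (f b) \<longleftrightarrow> x \<in> V - {f opp}" for x
    proof (cases "x \<in> V")
      case True
      then obtain j where j: "j < n" "f j = x" using fsurj by blast
      have "x \<in> Lset V E (f a) (f b) \<longleftrightarrow> cdist n a j \<noteq> cdist n b j"
        unfolding Lset_def using True j deq ab by auto
      also have "\<dots> \<longleftrightarrow> j \<noteq> opp" using arA[OF nk ab(1) j(1) ab(3)] opp_def by simp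
      also have "\<dots> \<longleftrightarrow> x \<noteq> f opp" using finj j o by blast
      finally show ?thesis using True by blast
    qed (auto simp: Lset_def)
    then have "Lset V E (f a) (f b) = V - {f opp}" by blast
    then show ?thesis using cardV fV[OF o] finV by simp
  qed
  have all: "card (Lset V E u v) = n - 1" if e: "E u v" for u v
  proof -
    obtain a b where ab: "a < n" "b < n" "f a = u" "f b = v" using fsurj Ein e by metis
    then have "b = (if a+1 = n then 0 else a+1) \<or> a = (if b+1 = n then 0 else b+1)" using adj' e by blast
    then show ?thesis using key ab Lset_sym by metis
  qed
  have e01: "E (f 0) (f 1)" using adj' n3 by simp
  have "{card (Lset V E u v) | u v. E u v} = {n-1}"
  proof
    show "{card (Lset V E u v) | u v. E u v} \<subseteq> {n-1}" using all by auto
    have "n - 1 = card (Lset V E (f 0) (f 1))" using all[OF e01] by simp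
    then show "{n-1} \<subseteq> {card (Lset V E u v) | u v. E u v}" using e01 by blast
  qed
  then show ?thesis unfolding lG_def using cardV by simp
qed

end

theorem theorem2p11:
  fixes V :: "'a set" and E :: "'a \<Rightarrow> 'a \<Rightarrow> bool"
  assumes "simple_graph V E" and "connected_graph V E" and "\<exists>u v. E u v"
  shows "lG V E = card V - 1 \<longleftrightarrow> (\<exists>n. odd n \<and> iso_to_cycle V E n)"
proof -
  interpret G V E by unfold_locales (rule assms)+
  show ?thesis
  proof
    assume "\<exists>n. odd n \<and> iso_to_cycle V E n"
    then show "lG V E = card V - 1" using backward by blast
  next
    assume lg: "lG V E = card V - 1"
    define N where "N = card V"
    define S where "S = {card (Lset V E u v) | u v. E u v}"
    have LV: "Lset V E u v \<subseteq> V" for u v unfolding Lset_def by auto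
    have "S \<subseteq> {0..N}"
    proof
      fix s assume "s \<in> S"
      then obtain u v where "s = card (Lset V E u v)" unfolding S_def by blast
      then show "s \<in> {0..N}" using card_mono[OF finV LV] N_def by simp
    qed
    then have finS: "finite S" using finite_subset by blast
    have neS: "S \<noteq> {}" using assms(3) unfolding S_def by blast
    have MS: "Min S = N - 1" using lg unfolding lG_def S_def N_def by simp
    have Lmin: "N - 1 \<le> card (Lset V E u v)" if "E u v" for u v
    proof -
      have "card (Lset V E u v) \<in> S" unfolding S_def using that by blast
      then show ?thesis using Min_le[OF finS] MS by metis
    qed
    have "N - 1 \<in> S" using Min_in[OF finS neS] MS by simp
    then have "\<exists>a0 b0. N - 1 = card (Lset V E a0 b0) \<and> E a0 b0" unfolding S_def by (simp only: mem_Collect_eq)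
    then obtain a0 b0 where e0: "E a0 b0" and c0: "card (Lset V E a0 b0) = N - 1" by metis
    have "a0 \<noteq> b0" using e0 Eirr by blast
    then have "card {a0, b0} = 2" by simp
    moreover have "{a0, b0} \<subseteq> V" using Ein[OF e0] by simp
    ultimately have N2: "2 \<le> N" unfolding N_def using finV card_mono by metis
    have H1: "x = y" if "E a b" "x\<in>V" "y\<in>V" "d a x = d b x" "d a y = d b y" for a b x y
    proof (rule ccontr)
      assume xy: "x \<noteq> y"
      have "Lset V E a b \<subseteq> V - {x, y}" using that LV unfolding Lset_def by auto
      then have "card (Lset V E a b) \<le> card (V - {x,y})" using finV by (simp add: card_mono)
      also have "\<dots> = N - 2" unfolding N_def using card_Diff_subset[of "{x,y}" V] that xy by simp
      finally show False using Lmin[OF that(1)] N2 by linarith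
    qed
    have "\<exists>x0\<in>V. d a0 x0 = d b0 x0"
    proof (rule ccontr)
      assume "\<not> ?thesis"
      then have "Lset V E a0 b0 = V" unfolding Lset_def by auto
      then show False using c0 N2 N_def by simp
    qed
    then obtain x0 where x0: "x0 \<in> V" "d a0 x0 = d b0 x0" by blast
    show "\<exists>n. odd n \<and> iso_to_cycle V E n"
    proof (rule forward[OF _ e0 x0])
      fix a b x y assume "E a b" "x\<in>V" "y\<in>V" "d a x = d b x" "d a y = d b y"
      then show "x = y" by (rule H1)
    qed
  qed
qed


end
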